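(* For all integers $0\le k\le n$ and all $x$, the Euler polynomials satisfy \[ \sum_{j=0}^{n-k}\binom{n-k}{j}(-1)^{j}E_{j+k}(x)=(-1)^{n+k+1}\sum_{j=0}^{k}\binom{k}{j}E_{n-j}(x)+2x^{k}(1-x)^{n-k}. \]
   Context: The Euler polynomials are defined by $\sum_{n\ge0}E_n(x)\frac{t^n}{n!}=\frac{2e^{xt}}{e^t+1}$. *)

theory Defs
  imports "HOL-Analysis.Analysis" "HOL-Computational_Algebra.Formal_Power_Series"
begin

definition euler_poly :: "nat \<Rightarrow> real \<Rightarrow> real" where
  "euler_poly n x = fact n * fps_nth (fps_const 2 * fps_exp x / (fps_exp 1 + 1)) n"

end

theory Submission
  imports Defs
begin

lemma euler_base:
  "(\<Sum>j\<le>k. real (k choose j) * euler_poly j x) + euler_poly k x = 2 * x^k"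
proof -
  define D where "D = (fps_exp (1::real) + 1)"
  define G where "G = fps_const 2 * fps_exp x / D"
  have D0: "fps_nth D 0 \<noteq> 0" by (simp add: D_def)
  have GD: "G * D = fps_const 2 * fps_exp x"
    unfolding G_def using D0 by (simp add: fps_divide_unit mult.assoc inverse_mult_eq_1)
  have "fps_nth (G * D) k = fps_nth (G * fps_exp 1) k + fps_nth G k"
    by (simp add: D_def distrib_left)
  also have "fps_nth (G * fps_exp 1) k = (\<Sum>i=0..k. fps_nth G i / fact (k - i))"
    by (simp add: fps_mult_nth)
  finally have e: "(\<Sum>i=0..k. fps_nth G i / fact (k - i)) + fps_nth G k = 2 * x^k / fact k"
    using GD by simp
  have "(\<Sum>j\<le>k. real (k choose j) * euler_poly j x) = fact k * (\<Sum>i=0..k. fps_nth G i / fact (k - i))"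
    unfolding sum_distrib_left atLeast0AtMost
  proof (rule sum.cong)
    fix i assume "i \<in> {..k}"
    then have "i \<le> k" by simp
    then show "real (k choose i) * euler_poly i x = fact k * (fps_nth G i / fact (k - i))"
      by (simp add: euler_poly_def G_def D_def binomial_fact)
  qed simp
  then show ?thesis using e
    by (simp add: euler_poly_def G_def D_def field_simps)
qed

definition AA where "AA x k m = (\<Sum>j\<le>m. real (m choose j) * (-1)^j * euler_poly (j+k) x)"
definition BB where "BB x k m = (\<Sum>j\<le>k. real (k choose j) * euler_poly (m+k-j) x)"

lemma AA_rec: "AA x k (Suc m) = AA x k m - AA x (Suc k) m"
proof -
  let ?E = "\<lambda>j. euler_poly j x"
  have pw: "\<And>i. real (Suc m choose Suc i) * (-1)^(Suc i) * ?E (Suc i + k)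
     = real (m choose Suc i) * (-1)^(Suc i) * ?E (Suc i + k) + real (m choose i) * (-1)^(Suc i) * ?E (Suc i + k)"
    by (simp add: algebra_simps)
  have "AA x k (Suc m) = (?E k + (\<Sum>i\<le>m. real (m choose Suc i) * (-1)^(Suc i) * ?E (Suc i + k)))
      + (\<Sum>i\<le>m. real (m choose i) * (-1)^(Suc i) * ?E (Suc i + k))"
    unfolding AA_def sum.atMost_Suc_shift pw sum.distrib by simp
  also have "?E k + (\<Sum>i\<le>m. real (m choose Suc i) * (-1)^(Suc i) * ?E (Suc i + k))
      = (\<Sum>j\<le>Suc m. real (m choose j) * (-1)^j * ?E (j + k))"
    unfolding sum.atMost_Suc_shift by simp
  also have "\<dots> = AA x k m" unfolding AA_def by simp
  also have "(\<Sum>i\<le>m. real (m choose i) * (-1)^(Suc i) * ?E (Suc i + k)) = - AA x (Suc k) m"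
    unfolding AA_def by (simp add: sum_negf[symmetric])
  finally show ?thesis by simp
qed

lemma BB_rec: "BB x (Suc k) m = BB x k (Suc m) + BB x k m"
proof -
  let ?E = "\<lambda>j. euler_poly j x"
  have pw: "\<And>i. real (Suc k choose Suc i) * ?E (m + Suc k - Suc i)
     = real (k choose Suc i) * ?E (m+k-i) + real (k choose i) * ?E (m+k-i)"
    by (simp add: algebra_simps)
  have "BB x (Suc k) m = (?E (m + Suc k) + (\<Sum>i\<le>k. real (k choose Suc i) * ?E (m+k-i)))
      + (\<Sum>i\<le>k. real (k choose i) * ?E (m+k-i))"
    unfolding BB_def sum.atMost_Suc_shift pw sum.distrib by simp
  also have "?E (m + Suc k) + (\<Sum>i\<le>k. real (k choose Suc i) * ?E (m+k-i))
      = (\<Sum>j\<le>Suc k. real (k choose j) * ?E (Suc m + k - j))"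
    unfolding sum.atMost_Suc_shift by simp
  also have "\<dots> = BB x k (Suc m)" unfolding BB_def by simp
  finally show ?thesis unfolding BB_def by simp
qed

lemma main_AB: "AA x k m = (-1)^(m+1) * BB x k m + 2 * x^k * (1-x)^m"
proof (induction m arbitrary: k)
  case 0
  have "BB x k 0 = (\<Sum>j\<le>k. real (k choose j) * euler_poly j x)"
    unfolding BB_def
    by (rule sum.reindex_bij_witness[where i="\<lambda>j. k - j" and j="\<lambda>j. k - j"])
       (auto simp: binomial_symmetric[symmetric])
  then show ?case using euler_base[of k x] by (simp add: AA_def)
next
  case (Suc m)
  show ?case
    unfolding AA_rec Suc.IH BB_rec[of x k m] by (simp add: algebra_simps)
qed

theorem mainTheorem5:
  fixes k n :: nat and x :: real
  assumes "k \<le> n"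
  shows "(\<Sum>j=0..n-k. real (n-k choose j) * (-1)^j * euler_poly (j+k) x)
       = (-1)^(n+k+1) * (\<Sum>j=0..k. real (k choose j) * euler_poly (n-j) x)
         + 2 * x^k * (1-x)^(n-k)"
proof -
  have n: "n - k + k = n" using assms by simp
  have "(-1::real)^(n+k+1) = (-1)^(n-k+1)"
  proof -
    have "n + k + 1 = (n - k + 1) + 2 * k" using assms by simp
    then have "(-1::real)^(n+k+1) = (-1)^(n - k + 1) * ((-1)^2)^k"
      by (metis power_add power_mult)
    then show ?thesis by simp
  qed
  then show ?thesis using main_AB[of x k "n-k"]
    unfolding AA_def BB_def atLeast0AtMost n by simp
qed

end
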